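(* Let $(M_I,\triangleright)$ be a prefactor system and $\alpha,\beta$ consistent sets in it. The following are equivalent: (1) $\alpha^m=\beta^m$; (2) $a_i\approx b_i$ for all $i\in I$, $a_i\in\alpha\cap M_i$, $b_i\in\beta\cap M_i$; (3) $a_i\approx b_j$ for all $i,j\in I$, $a_i\in\alpha\cap M_i$, $b_j\in\beta\cap M_j$.
   Context: Let $(I,\le)$ be a non-empty directed preordered set. Fix a family $\mathcal F(I)$ of subsets of $I$ such that every member is cofinal in $I$, $\mathcal F(I)$ is closed under supersets and finite intersections, and $\mathcal F(I)$ contains every non-empty upward closed subset of $I$. A system $(M_I,\triangleright)$ consists of sets $M_i$ ($i\in I$, pairwise disjoint) and relations $\triangleright\subseteq M_{i'}\times M_i$ for $i\le i'$, reflexive for $i=i'$. $a_i\approx b_j$ iff there are $i'\ge i,j$ and $c\in M_{i'}$ with $c\triangleright a_i$, $c\triangleright b_j$. A prefactor system is a system with $a_{i'}\approx a_i\iff a_{i'}\triangleright a_i$ for all $i\le i'$. A consistent set is a set $\alpha\subseteq\bigcup_i M_i$ with $a_{i'}\triangleright a_i$ for all $a_{i'}\in\alpha\cap M_{i'}$, $a_i\in\alpha\cap M_i$, $i'\ge i$, and with $\{i\mid\alpha\cap M_i\ne\emptyset\}\in\mathcal F(I)$. For a consistent set $\alpha$, $\alpha^m$ denotes the unique inclusion-maximal consistent set containing $\alpha$. *)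

theory Defs
  imports Main
begin

definition directed_preorder :: "'i set \<Rightarrow> ('i \<Rightarrow> 'i \<Rightarrow> bool) \<Rightarrow> bool" where
  "directed_preorder I le \<longleftrightarrow>
     I \<noteq> {} \<and>
     (\<forall>i\<in>I. le i i) \<and>
     (\<forall>i\<in>I. \<forall>j\<in>I. \<forall>k\<in>I. le i j \<longrightarrow> le j k \<longrightarrow> le i k) \<and>
     (\<forall>i\<in>I. \<forall>j\<in>I. \<exists>k\<in>I. le i k \<and> le j k)"

definition cofinal :: "'i set \<Rightarrow> ('i \<Rightarrow> 'i \<Rightarrow> bool) \<Rightarrow> 'i set \<Rightarrow> bool" where
  "cofinal I le A \<longleftrightarrow> A \<subseteq> I \<and> (\<forall>i\<in>I. \<exists>j\<in>A. le i j)"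

definition upward_closed :: "'i set \<Rightarrow> ('i \<Rightarrow> 'i \<Rightarrow> bool) \<Rightarrow> 'i set \<Rightarrow> bool" where
  "upward_closed I le A \<longleftrightarrow> A \<subseteq> I \<and> (\<forall>i\<in>A. \<forall>j\<in>I. le i j \<longrightarrow> j \<in> A)"

definition admissible_family :: "'i set \<Rightarrow> ('i \<Rightarrow> 'i \<Rightarrow> bool) \<Rightarrow> 'i set set \<Rightarrow> bool" where
  "admissible_family I le F \<longleftrightarrow>
     (\<forall>A\<in>F. cofinal I le A) \<and>
     (\<forall>A\<in>F. \<forall>B. A \<subseteq> B \<and> B \<subseteq> I \<longrightarrow> B \<in> F) \<and>
     (\<forall>A\<in>F. \<forall>B\<in>F. A \<inter> B \<in> F) \<and>
     (\<forall>A. A \<noteq> {} \<and> upward_closed I le A \<longrightarrow> A \<in> F)"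

definition system :: "'i set \<Rightarrow> ('i \<Rightarrow> 'i \<Rightarrow> bool) \<Rightarrow> ('i \<Rightarrow> 'a set) \<Rightarrow> ('a \<Rightarrow> 'a \<Rightarrow> bool) \<Rightarrow> bool" where
  "system I le M tri \<longleftrightarrow>
     (\<forall>i\<in>I. \<forall>j\<in>I. i \<noteq> j \<longrightarrow> M i \<inter> M j = {}) \<and>
     (\<forall>c a. tri c a \<longrightarrow> (\<exists>i\<in>I. \<exists>i'\<in>I. le i i' \<and> c \<in> M i' \<and> a \<in> M i)) \<and>
     (\<forall>i\<in>I. \<forall>a\<in>M i. tri a a)"

definition approx :: "'i set \<Rightarrow> ('i \<Rightarrow> 'i \<Rightarrow> bool) \<Rightarrow> ('i \<Rightarrow> 'a set) \<Rightarrow> ('a \<Rightarrow> 'a \<Rightarrow> bool) \<Rightarrow> 'a \<Rightarrow> 'a \<Rightarrow> bool" where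
  "approx I le M tri a b \<longleftrightarrow>
     (\<exists>i\<in>I. \<exists>j\<in>I. \<exists>i'\<in>I. a \<in> M i \<and> b \<in> M j \<and> le i i' \<and> le j i' \<and>
        (\<exists>c\<in>M i'. tri c a \<and> tri c b))"

definition prefactor_system :: "'i set \<Rightarrow> ('i \<Rightarrow> 'i \<Rightarrow> bool) \<Rightarrow> ('i \<Rightarrow> 'a set) \<Rightarrow> ('a \<Rightarrow> 'a \<Rightarrow> bool) \<Rightarrow> bool" where
  "prefactor_system I le M tri \<longleftrightarrow>
     system I le M tri \<and>
     (\<forall>i\<in>I. \<forall>i'\<in>I. le i i' \<longrightarrow> (\<forall>a'\<in>M i'. \<forall>a\<in>M i. approx I le M tri a' a \<longleftrightarrow> tri a' a))"

definition consistent :: "'i set \<Rightarrow> ('i \<Rightarrow> 'i \<Rightarrow> bool) \<Rightarrow> 'i set set \<Rightarrow> ('i \<Rightarrow> 'a set) \<Rightarrow> ('a \<Rightarrow> 'a \<Rightarrow> bool) \<Rightarrow> 'a set \<Rightarrow> bool" where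
  "consistent I le F M tri \<alpha> \<longleftrightarrow>
     \<alpha> \<subseteq> (\<Union>i\<in>I. M i) \<and>
     (\<forall>i\<in>I. \<forall>i'\<in>I. le i i' \<longrightarrow> (\<forall>a'\<in>\<alpha> \<inter> M i'. \<forall>a\<in>\<alpha> \<inter> M i. tri a' a)) \<and>
     {i\<in>I. \<alpha> \<inter> M i \<noteq> {}} \<in> F"

definition maxcons :: "'i set \<Rightarrow> ('i \<Rightarrow> 'i \<Rightarrow> bool) \<Rightarrow> 'i set set \<Rightarrow> ('i \<Rightarrow> 'a set) \<Rightarrow> ('a \<Rightarrow> 'a \<Rightarrow> bool) \<Rightarrow> 'a set \<Rightarrow> 'a set" where
  "maxcons I le F M tri \<alpha> =
     (THE \<gamma>. consistent I le F M tri \<gamma> \<and> \<alpha> \<subseteq> \<gamma> \<and>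
            (\<forall>\<delta>. consistent I le F M tri \<delta> \<and> \<gamma> \<subseteq> \<delta> \<longrightarrow> \<delta> = \<gamma>))"

end

theory Submission
  imports Defs
begin

lemma approx_sym: "approx I le M tri a b \<Longrightarrow> approx I le M tri b a"
  unfolding approx_def by blast

lemma pf_tri:
  assumes "prefactor_system I le M tri" "i \<in> I" "i' \<in> I" "le i i'" "a' \<in> M i'" "a \<in> M i"
    "approx I le M tri a' a"
  shows "tri a' a"
  using assms unfolding prefactor_system_def by blast

lemma approx_intro:
  assumes "i \<in> I" "j \<in> I" "k \<in> I" "a \<in> M i" "b \<in> M j" "le i k" "le j k" "c \<in> M k"
    "tri c a" "tri c b"
  shows "approx I le M tri a b"
  using assms unfolding approx_def by blast

lemma cons_tri:
  assumes "consistent I le F M tri \<alpha>" "i \<in> I" "i' \<in> I" "le i i'" "a' \<in> \<alpha>" "a' \<in> M i'"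
    "a \<in> \<alpha>" "a \<in> M i"
  shows "tri a' a"
  using assms unfolding consistent_def by blast

lemma sys_refl:
  assumes "prefactor_system I le M tri" "i \<in> I" "a \<in> M i"
  shows "tri a a"
  using assms unfolding prefactor_system_def system_def by blast

lemma dp_refl: "directed_preorder I le \<Longrightarrow> i \<in> I \<Longrightarrow> le i i"
  unfolding directed_preorder_def by blast

lemma dp_trans: "directed_preorder I le \<Longrightarrow> i \<in> I \<Longrightarrow> j \<in> I \<Longrightarrow> k \<in> I \<Longrightarrow> le i j \<Longrightarrow> le j k \<Longrightarrow> le i k"
  unfolding directed_preorder_def by blast

lemma dp_dir: "directed_preorder I le \<Longrightarrow> i \<in> I \<Longrightarrow> j \<in> I \<Longrightarrow> \<exists>k\<in>I. le i k \<and> le j k"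
  unfolding directed_preorder_def by blast

lemma af_cof: "admissible_family I le F \<Longrightarrow> A \<in> F \<Longrightarrow> cofinal I le A"
  unfolding admissible_family_def by (elim conjE) (erule bspec)

lemma af_int: "admissible_family I le F \<Longrightarrow> A \<in> F \<Longrightarrow> B \<in> F \<Longrightarrow> A \<inter> B \<in> F"
  unfolding admissible_family_def by blast

lemma af_sup: "admissible_family I le F \<Longrightarrow> A \<in> F \<Longrightarrow> A \<subseteq> B \<Longrightarrow> B \<subseteq> I \<Longrightarrow> B \<in> F"
  unfolding admissible_family_def by blast

definition idx where "idx I M \<gamma> = {i\<in>I. \<gamma> \<inter> M i \<noteq> {}}"

lemma cons_idx: "consistent I le F M tri \<gamma> \<Longrightarrow> idx I M \<gamma> \<in> F"
  unfolding consistent_def idx_def by blast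

lemma joint_cofinal:
  assumes "directed_preorder I le" "admissible_family I le F"
    "consistent I le F M tri \<alpha>" "consistent I le F M tri \<beta>" "i \<in> I" "j \<in> I"
  shows "\<exists>k\<in>I. le i k \<and> le j k \<and> (\<exists>a. a \<in> \<alpha> \<inter> M k) \<and> (\<exists>b. b \<in> \<beta> \<inter> M k)"
proof -
  have "idx I M \<alpha> \<inter> idx I M \<beta> \<in> F"
    using af_int[OF assms(2) cons_idx[OF assms(3)] cons_idx[OF assms(4)]] .
  hence cf: "cofinal I le (idx I M \<alpha> \<inter> idx I M \<beta>)"
    by (rule af_cof[OF assms(2)])
  obtain m where m: "m \<in> I" "le i m" "le j m" using dp_dir[OF assms(1,5,6)] by blast
  obtain k where k: "k \<in> idx I M \<alpha> \<inter> idx I M \<beta>" "le m k" using cf m(1) unfolding cofinal_def by blast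
  have kI: "k \<in> I" using k unfolding idx_def by blast
  show ?thesis
    apply (rule bexI[of _ k])
    using k kI m dp_trans[OF assms(1)] assms(5,6) unfolding idx_def by blast+
qed

lemma keyK:
  assumes pf: "prefactor_system I le M tri"
    and ca: "consistent I le F M tri \<alpha>"
    and h2: "\<forall>i\<in>I. \<forall>a\<in>\<alpha> \<inter> M i. \<forall>b\<in>\<beta> \<inter> M i. approx I le M tri a b"
    and dp: "directed_preorder I le"
    and i: "i \<in> I" "a \<in> \<alpha>" "a \<in> M i" and k: "k \<in> I" "le i k" "b \<in> \<beta>" "b \<in> M k"
    "ak \<in> \<alpha>" "ak \<in> M k"
  shows "tri b a"
proof -
  have "approx I le M tri ak b" using h2 k by blast
  hence t1: "tri ak b" using pf_tri[OF pf k(1) k(1) dp_refl[OF dp k(1)]] k by blast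
  have t2: "tri ak a" using cons_tri[OF ca i(1) k(1) k(2)] k i by blast
  have "approx I le M tri b a"
    using approx_intro[of k I i k b M a le ak tri] k i t1 t2 dp_refl[OF dp k(1)] by blast
  thus ?thesis using pf_tri[OF pf i(1) k(1) k(2)] k i by blast
qed

lemma pair_tri:
  assumes dp: "directed_preorder I le" and af: "admissible_family I le F"
    and pf: "prefactor_system I le M tri"
    and ca: "consistent I le F M tri \<alpha>" and cb: "consistent I le F M tri \<beta>"
    and h2: "\<forall>i\<in>I. \<forall>a\<in>\<alpha> \<inter> M i. \<forall>b\<in>\<beta> \<inter> M i. approx I le M tri a b"
    and x: "i \<in> I" "i' \<in> I" "le i i'" "a \<in> \<alpha>" "a \<in> M i'" "b \<in> \<beta>" "b \<in> M i"
  shows "tri a b"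
proof -
  obtain k ak bk where k: "k \<in> I" "le i' k" "ak \<in> \<alpha>" "ak \<in> M k" "bk \<in> \<beta>" "bk \<in> M k"
    using joint_cofinal[OF dp af ca cb x(2) x(2)] by blast
  have lik: "le i k" using dp_trans[OF dp x(1) x(2) k(1) x(3) k(2)] .
  have t1: "tri bk a" using keyK[OF pf ca h2 dp x(2) x(4) x(5) k(1) k(2) k(5) k(6) k(3) k(4)] .
  have t2: "tri bk b" using cons_tri[OF cb x(1) k(1) lik k(5) k(6) x(6) x(7)] .
  have "approx I le M tri a b" using approx_intro[of i' I i k a M b le bk tri] x k lik t1 t2 by blast
  thus ?thesis using pf_tri[OF pf x(1) x(2) x(3) x(5) x(7)] by blast
qed

definition Um where "Um I le F M tri \<alpha> = \<Union>{\<gamma>. consistent I le F M tri \<gamma> \<and> \<alpha> \<subseteq> \<gamma>}"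

lemma Um_cons:
  assumes dp: "directed_preorder I le" and af: "admissible_family I le F"
    and pf: "prefactor_system I le M tri" and ca: "consistent I le F M tri \<alpha>"
  shows "consistent I le F M tri (Um I le F M tri \<alpha>)"
proof -
  let ?U = "Um I le F M tri \<alpha>"
  have sub: "\<alpha> \<subseteq> ?U" using ca unfolding Um_def by blast
  have A: "?U \<subseteq> (\<Union>i\<in>I. M i)" unfolding Um_def consistent_def by blast
  have B: "tri g d" if hB: "i \<in> I" "i' \<in> I" "le i i'" "g \<in> ?U" "g \<in> M i'" "d \<in> ?U" "d \<in> M i" for i i' g d
  proof -
    obtain \<gamma> where g: "consistent I le F M tri \<gamma>" "\<alpha> \<subseteq> \<gamma>" "g \<in> \<gamma>" using hB(4) unfolding Um_def by auto
    obtain \<delta> where d: "consistent I le F M tri \<delta>" "\<alpha> \<subseteq> \<delta>" "d \<in> \<delta>" using hB(6) unfolding Um_def by auto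
    obtain k a where k: "k \<in> I" "le i' k" "a \<in> \<alpha>" "a \<in> M k"
      using joint_cofinal[OF dp af ca ca hB(2) hB(2)] by blast
    have lik: "le i k" using dp_trans[OF dp hB(1) hB(2) k(1) hB(3) k(2)] .
    have t1: "tri a g" using cons_tri[OF g(1) hB(2) k(1) k(2)] k g hB by blast
    have t2: "tri a d" using cons_tri[OF d(1) hB(1) k(1) lik] k d hB by blast
    have "approx I le M tri g d" using approx_intro[of i' I i k g M d le a tri] hB k lik t1 t2 by blast
    thus ?thesis using pf_tri[OF pf hB(1) hB(2) hB(3) hB(5) hB(7)] by blast
  qed
  have C: "{i\<in>I. ?U \<inter> M i \<noteq> {}} \<in> F"
  proof -
    have "idx I M \<alpha> \<in> F" using cons_idx[OF ca] .
    moreover have "idx I M \<alpha> \<subseteq> {i\<in>I. ?U \<inter> M i \<noteq> {}}" using sub unfolding idx_def by blast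
    ultimately show ?thesis using af_sup[OF af] by blast
  qed
  show ?thesis unfolding consistent_def using A B C by blast
qed

lemma maxcons_Um:
  assumes dp: "directed_preorder I le" and af: "admissible_family I le F"
    and pf: "prefactor_system I le M tri" and ca: "consistent I le F M tri \<alpha>"
  shows "maxcons I le F M tri \<alpha> = Um I le F M tri \<alpha>"
  unfolding maxcons_def
proof (rule the_equality)
  let ?U = "Um I le F M tri \<alpha>"
  have cu: "consistent I le F M tri ?U" using Um_cons[OF assms] .
  show "consistent I le F M tri ?U \<and> \<alpha> \<subseteq> ?U \<and>
        (\<forall>\<delta>. consistent I le F M tri \<delta> \<and> ?U \<subseteq> \<delta> \<longrightarrow> \<delta> = ?U)"
    using cu ca unfolding Um_def by blast
  show "\<gamma> = ?U" if "consistent I le F M tri \<gamma> \<and> \<alpha> \<subseteq> \<gamma> \<and>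
        (\<forall>\<delta>. consistent I le F M tri \<delta> \<and> \<gamma> \<subseteq> \<delta> \<longrightarrow> \<delta> = \<gamma>)" for \<gamma>
  proof -
    have "\<gamma> \<subseteq> ?U" using that unfolding Um_def by blast
    thus ?thesis using that cu by blast
  qed
qed

lemma Um_mono:
  assumes "consistent I le F M tri \<gamma>" "\<beta> \<subseteq> \<gamma>" "\<gamma> \<subseteq> Um I le F M tri \<alpha>"
  shows "Um I le F M tri \<gamma> \<subseteq> Um I le F M tri \<beta>"
  using assms unfolding Um_def by blast

theorem lemma2p10:
  fixes I :: "'i set" and le :: "'i \<Rightarrow> 'i \<Rightarrow> bool" and F :: "'i set set"
    and M :: "'i \<Rightarrow> 'a set" and tri :: "'a \<Rightarrow> 'a \<Rightarrow> bool" and \<alpha> \<beta> :: "'a set"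
  assumes "directed_preorder I le"
    and "admissible_family I le F"
    and "prefactor_system I le M tri"
    and "consistent I le F M tri \<alpha>"
    and "consistent I le F M tri \<beta>"
  shows "(maxcons I le F M tri \<alpha> = maxcons I le F M tri \<beta> \<longleftrightarrow>
            (\<forall>i\<in>I. \<forall>a\<in>\<alpha> \<inter> M i. \<forall>b\<in>\<beta> \<inter> M i. approx I le M tri a b))
       \<and> ((\<forall>i\<in>I. \<forall>a\<in>\<alpha> \<inter> M i. \<forall>b\<in>\<beta> \<inter> M i. approx I le M tri a b) \<longleftrightarrow>
            (\<forall>i\<in>I. \<forall>j\<in>I. \<forall>a\<in>\<alpha> \<inter> M i. \<forall>b\<in>\<beta> \<inter> M j. approx I le M tri a b))"
proof -
  note dp = assms(1) and af = assms(2) and pf = assms(3) and ca = assms(4) and cb = assms(5)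
  have ma: "maxcons I le F M tri \<alpha> = Um I le F M tri \<alpha>" using maxcons_Um[OF dp af pf ca] .
  have mb: "maxcons I le F M tri \<beta> = Um I le F M tri \<beta>" using maxcons_Um[OF dp af pf cb] .
  have cua: "consistent I le F M tri (Um I le F M tri \<alpha>)" using Um_cons[OF dp af pf ca] .
  have cub: "consistent I le F M tri (Um I le F M tri \<beta>)" using Um_cons[OF dp af pf cb] .
  let ?P2 = "\<forall>i\<in>I. \<forall>a\<in>\<alpha> \<inter> M i. \<forall>b\<in>\<beta> \<inter> M i. approx I le M tri a b"
  have e1: "maxcons I le F M tri \<alpha> = maxcons I le F M tri \<beta> \<longleftrightarrow> ?P2"
  proof
    assume eq: "maxcons I le F M tri \<alpha> = maxcons I le F M tri \<beta>"
    let ?G = "Um I le F M tri \<alpha>"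
    have sa: "\<alpha> \<subseteq> ?G" using ca unfolding Um_def by blast
    have sb: "\<beta> \<subseteq> ?G" using eq ma mb cb unfolding Um_def by blast
    show ?P2
    proof (intro ballI)
      fix i a b assume h: "i \<in> I" "a \<in> \<alpha> \<inter> M i" "b \<in> \<beta> \<inter> M i"
      have "tri a b" using cons_tri[OF cua h(1) h(1) dp_refl[OF dp h(1)]] h sa sb by blast
      moreover have "tri a a" using sys_refl[OF pf h(1)] h by blast
      ultimately show "approx I le M tri a b"
        using approx_intro[of i I i i a M b le a tri] h dp_refl[OF dp h(1)] by blast
    qed
  next
    assume h2: ?P2
    have h2': "\<forall>i\<in>I. \<forall>a\<in>\<beta> \<inter> M i. \<forall>b\<in>\<alpha> \<inter> M i. approx I le M tri a b"
      proof (intro ballI)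
      fix i a b assume "i \<in> I" "a \<in> \<beta> \<inter> M i" "b \<in> \<alpha> \<inter> M i"
      hence "approx I le M tri b a" using h2 by blast
      thus "approx I le M tri a b" by (rule approx_sym)
    qed
    have cab: "consistent I le F M tri (\<alpha> \<union> \<beta>)"
    proof -
      have A: "\<alpha> \<union> \<beta> \<subseteq> (\<Union>i\<in>I. M i)" using ca cb unfolding consistent_def by blast
      have B: "tri x y" if "i \<in> I" "i' \<in> I" "le i i'" "x \<in> \<alpha> \<union> \<beta>" "x \<in> M i'" "y \<in> \<alpha> \<union> \<beta>" "y \<in> M i"
        for i i' x y
        using that cons_tri[OF ca that(1,2,3)] cons_tri[OF cb that(1,2,3)]
          pair_tri[OF dp af pf ca cb h2 that(1,2,3)] pair_tri[OF dp af pf cb ca h2' that(1,2,3)]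
        by blast
      have C: "{i\<in>I. (\<alpha> \<union> \<beta>) \<inter> M i \<noteq> {}} \<in> F"
      proof -
        have "idx I M \<alpha> \<in> F" using cons_idx[OF ca] .
        moreover have "idx I M \<alpha> \<subseteq> {i\<in>I. (\<alpha> \<union> \<beta>) \<inter> M i \<noteq> {}}" unfolding idx_def by blast
        ultimately show ?thesis using af_sup[OF af] by blast
      qed
      show ?thesis unfolding consistent_def using A B C by blast
    qed
    have s1: "\<alpha> \<union> \<beta> \<subseteq> Um I le F M tri \<alpha>" using cab unfolding Um_def by blast
    have s2: "\<alpha> \<union> \<beta> \<subseteq> Um I le F M tri \<beta>" using cab unfolding Um_def by blast
    have "Um I le F M tri \<alpha> \<subseteq> Um I le F M tri \<beta>" using cua s1 unfolding Um_def by blast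
    moreover have "Um I le F M tri \<beta> \<subseteq> Um I le F M tri \<alpha>" using cub s2 unfolding Um_def by blast
    ultimately show "maxcons I le F M tri \<alpha> = maxcons I le F M tri \<beta>" using ma mb by blast
  qed
  have e2: "?P2 \<longleftrightarrow> (\<forall>i\<in>I. \<forall>j\<in>I. \<forall>a\<in>\<alpha> \<inter> M i. \<forall>b\<in>\<beta> \<inter> M j. approx I le M tri a b)"
  proof
    assume h2: ?P2
    show "\<forall>i\<in>I. \<forall>j\<in>I. \<forall>a\<in>\<alpha> \<inter> M i. \<forall>b\<in>\<beta> \<inter> M j. approx I le M tri a b"
    proof (intro ballI)
      fix i j a b assume h: "i \<in> I" "j \<in> I" "a \<in> \<alpha> \<inter> M i" "b \<in> \<beta> \<inter> M j"
      obtain k ak bk where k: "k \<in> I" "le i k" "le j k" "ak \<in> \<alpha>" "ak \<in> M k" "bk \<in> \<beta>" "bk \<in> M k"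
        using joint_cofinal[OF dp af ca cb h(1) h(2)] by blast
      have t1: "tri bk a" using keyK[OF pf ca h2 dp h(1) _ _ k(1) k(2) k(6) k(7) k(4) k(5)] h by blast
      have t2: "tri bk b" using cons_tri[OF cb h(2) k(1) k(3) k(6) k(7)] h by blast
      show "approx I le M tri a b" using approx_intro[of i I j k a M b le bk tri] h k t1 t2 by blast
    qed
  next
    assume "\<forall>i\<in>I. \<forall>j\<in>I. \<forall>a\<in>\<alpha> \<inter> M i. \<forall>b\<in>\<beta> \<inter> M j. approx I le M tri a b"
    thus ?P2 by blast
  qed
  show ?thesis using e1 e2 by blast
qed

end
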